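(* Let $G=(U\cup V,E)$ be a bipartite graph, where $U$ and $V$ are disjoint stable sets, such that for every $v\in V$ and every $u\in N(v)$ we have $d(u)<2\,d(v)$. If $d(u)\neq d(v)$ for every edge $(u,v)\in E$, then $\eta(G)=1$; otherwise $\eta(G)=2$.
   Context: All graphs are finite, simple and undirected. For a vertex $v$, $N(v)$ is its set of neighbours and $d(v)=|N(v)|$. For a positive integer $k$, $[k]=\{1,\dots,k\}$. For a labeling $f:V(G)\to[k]$ and $S\subseteq V(G)$, $f(S)=\sum_{u\in S}f(u)$. A labeling $f:V(G)\to[k]$ is an additive $k$-coloring if $f(N(u))\neq f(N(v))$ for every edge $(u,v)$ of $G$. The additive chromatic number $\eta(G)$ is the least $k$ for which $G$ has an additive $k$-coloring. *)

theory Defs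
  imports Main
begin

definition simple_graph :: "'a set \<Rightarrow> ('a \<Rightarrow> 'a \<Rightarrow> bool) \<Rightarrow> bool" where
  "simple_graph Vs E \<longleftrightarrow> finite Vs \<and> (\<forall>x y. E x y \<longrightarrow> E y x)
     \<and> (\<forall>x. \<not> E x x) \<and> (\<forall>x y. E x y \<longrightarrow> x \<in> Vs \<and> y \<in> Vs)"

definition nbhd :: "'a set \<Rightarrow> ('a \<Rightarrow> 'a \<Rightarrow> bool) \<Rightarrow> 'a \<Rightarrow> 'a set" where
  "nbhd Vs E v = {u \<in> Vs. E v u}"

definition deg :: "'a set \<Rightarrow> ('a \<Rightarrow> 'a \<Rightarrow> bool) \<Rightarrow> 'a \<Rightarrow> nat" where
  "deg Vs E v = card (nbhd Vs E v)"

definition bipartition :: "'a set \<Rightarrow> ('a \<Rightarrow> 'a \<Rightarrow> bool) \<Rightarrow> 'a set \<Rightarrow> 'a set \<Rightarrow> bool" where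
  "bipartition Vs E U W \<longleftrightarrow> U \<inter> W = {} \<and> U \<union> W = Vs
     \<and> (\<forall>x\<in>U. \<forall>y\<in>U. \<not> E x y) \<and> (\<forall>x\<in>W. \<forall>y\<in>W. \<not> E x y)"

definition additive_coloring :: "'a set \<Rightarrow> ('a \<Rightarrow> 'a \<Rightarrow> bool) \<Rightarrow> nat \<Rightarrow> ('a \<Rightarrow> nat) \<Rightarrow> bool" where
  "additive_coloring Vs E k f \<longleftrightarrow> (\<forall>v\<in>Vs. f v \<in> {1..k})
     \<and> (\<forall>u v. E u v \<longrightarrow> sum f (nbhd Vs E u) \<noteq> sum f (nbhd Vs E v))"

definition eta :: "'a set \<Rightarrow> ('a \<Rightarrow> 'a \<Rightarrow> bool) \<Rightarrow> nat" where
  "eta Vs E = (LEAST k. 1 \<le> k \<and> (\<exists>f. additive_coloring Vs E k f))"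

end

theory Submission
  imports Defs
begin

lemma sum_const_on:
  assumes "finite Vs" "\<forall>v\<in>Vs. f v = c"
  shows "sum f (nbhd Vs E x) = c * deg Vs E x"
proof -
  have "sum f (nbhd Vs E x) = sum (\<lambda>_. c) (nbhd Vs E x)"
    by (rule sum.cong) (use assms in \<open>auto simp: nbhd_def\<close>)
  thus ?thesis by (simp add: deg_def)
qed

theorem mainTheorem1:
  fixes Vs U W :: "'a set" and E :: "'a \<Rightarrow> 'a \<Rightarrow> bool"
  assumes "simple_graph Vs E"
    and "bipartition Vs E U W"
    and "\<forall>v\<in>W. \<forall>u\<in>nbhd Vs E v. deg Vs E u < 2 * deg Vs E v"
  shows "eta Vs E = (if (\<forall>u v. E u v \<longrightarrow> deg Vs E u \<noteq> deg Vs E v) then 1 else 2)"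
proof -
  have fin: "finite Vs" and sym: "\<And>x y. E x y \<Longrightarrow> E y x"
    and inV: "\<And>x y. E x y \<Longrightarrow> x \<in> Vs \<and> y \<in> Vs"
    using assms(1) unfolding simple_graph_def by blast+
  have bp: "U \<inter> W = {}" "U \<union> W = Vs" "\<forall>x\<in>U. \<forall>y\<in>U. \<not> E x y" "\<forall>x\<in>W. \<forall>y\<in>W. \<not> E x y"
    using assms(2) unfolding bipartition_def by blast+
  have one: "additive_coloring Vs E 1 f \<longleftrightarrow> (\<forall>v\<in>Vs. f v = 1) \<and> (\<forall>u v. E u v \<longrightarrow> deg Vs E u \<noteq> deg Vs E v)" for f
  proof
    assume a: "additive_coloring Vs E 1 f"
    hence c: "\<forall>v\<in>Vs. f v = 1" unfolding additive_coloring_def by auto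
    thus "(\<forall>v\<in>Vs. f v = 1) \<and> (\<forall>u v. E u v \<longrightarrow> deg Vs E u \<noteq> deg Vs E v)"
      using a sum_const_on[OF fin c, of E] unfolding additive_coloring_def by auto
  next
    assume a: "(\<forall>v\<in>Vs. f v = 1) \<and> (\<forall>u v. E u v \<longrightarrow> deg Vs E u \<noteq> deg Vs E v)"
    thus "additive_coloring Vs E 1 f"
      using sum_const_on[OF fin, of f 1 E] unfolding additive_coloring_def by auto
  qed
  define g where "g v = (if v \<in> U then 2 else 1::nat)" for v
  have sU: "sum g (nbhd Vs E u) = deg Vs E u" if "u \<in> U" for u
  proof -
    have "sum g (nbhd Vs E u) = sum (\<lambda>_. 1) (nbhd Vs E u)"
      by (rule sum.cong) (use that bp in \<open>auto simp: nbhd_def g_def\<close>)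
    thus ?thesis by (simp add: deg_def)
  qed
  have sW: "sum g (nbhd Vs E v) = 2 * deg Vs E v" if "v \<in> W" for v
  proof -
    have "sum g (nbhd Vs E v) = sum (\<lambda>_. 2) (nbhd Vs E v)"
      by (rule sum.cong) (use that bp in \<open>auto simp: nbhd_def g_def\<close>)
    thus ?thesis by (simp add: deg_def)
  qed
  have key: "sum g (nbhd Vs E u) \<noteq> sum g (nbhd Vs E v)" if "u \<in> U" "v \<in> W" "E v u" for u v
  proof -
    have "u \<in> nbhd Vs E v" using that inV unfolding nbhd_def by auto
    hence "deg Vs E u < 2 * deg Vs E v" using assms(3) that by auto
    thus ?thesis using sU sW that by auto
  qed
  have g2: "additive_coloring Vs E 2 g"
    unfolding additive_coloring_def
  proof (intro conjI allI impI ballI)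
    fix v assume "v \<in> Vs" thus "g v \<in> {1..2}" by (auto simp: g_def)
  next
    fix u v assume e: "E u v"
    have "u \<in> Vs" "v \<in> Vs" using inV e by auto
    show "sum g (nbhd Vs E u) \<noteq> sum g (nbhd Vs E v)"
    proof (cases "u \<in> U")
      case True
      hence "v \<notin> U" using bp e by blast
      hence "v \<in> W" using bp \<open>v \<in> Vs\<close> by blast
      thus ?thesis using key[OF True _ sym[OF e]] by auto
    next
      case False
      hence "u \<in> W" using bp \<open>u \<in> Vs\<close> by blast
      hence "v \<notin> W" using bp e by blast
      hence "v \<in> U" using bp \<open>v \<in> Vs\<close> by blast
      thus ?thesis using key[OF _ \<open>u \<in> W\<close> e] by metis
    qed
  qed
  show ?thesis
  proof (cases "\<forall>u v. E u v \<longrightarrow> deg Vs E u \<noteq> deg Vs E v")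
    case True
    have "additive_coloring Vs E 1 (\<lambda>_. 1)" using one True by auto
    hence "eta Vs E = 1" unfolding eta_def
      by (intro Least_equality) auto
    thus ?thesis using True by simp
  next
    case False
    have "eta Vs E = 2" unfolding eta_def
    proof (intro Least_equality)
      show "1 \<le> (2::nat) \<and> (\<exists>f. additive_coloring Vs E 2 f)" using g2 by auto
    next
      fix k assume k: "1 \<le> k \<and> (\<exists>f. additive_coloring Vs E k f)"
      show "2 \<le> k"
      proof (rule ccontr)
        assume "\<not> 2 \<le> k" hence "k = 1" using k by auto
        thus False using k one False by auto
      qed
    qed
    thus ?thesis using False by simp
  qed
qed

end
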